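(* Let $P$ be a priority forest on $[n]_0$ with $m$ edges, and let $C$ be a maximal chain of $[\hat0,P]$ with Jordan–Hölder permutation $\lambda$. Then $s_P\circ\lambda$ is an $(m,n)$-parking function with priority forest $P$ and bird's eye permutation $\lambda^{-1}$.
   Context: $[n]=\{1,\dots,n\}$, $[n]_0=\{0,\dots,n\}$. A priority forest on $[n]_0$ is a rooted forest with vertex set $[n]_0$ whose component trees $T_0,T_1,\dots$ are increasing (each non-root vertex has a larger label than its parent) and satisfy: for $j<k$ every label of $T_j$ is smaller than every label of $T_k$. Its shifted parent map $s_P:[n]\to[n]$ is the partial function with $s_P(i)=p(i)+1$ for non-root $i$ with parent $p(i)$. $\Pi(n)$ is the poset of priority forests on $[n]_0$ ordered by inclusion of edge sets, with an extra top element; $\hat0$ is the edgeless forest. For priority forests $Q\lessdot Q'$ (one edge added), $\lambda(Q,Q')$ is the larger endpoint of the edge in $E(Q')\setminus E(Q)$. A maximal chain $\hat0=P_0\lessdot\cdots\lessdot P_m=P$ has Jordan–Hölder permutation $\lambda:[m]\to[n]$, $i\mapsto\lambda(P_{i-1},P_i)$, which is injective; $\lambda^{-1}$ is its partial inverse $[n]\to[m]$. An $(m,n)$-parking function is a map $\pi:[m]\to[n]$ such that when cars $1,\dots,m$ arrive in order to spots $1,\dots,n$ and car $i$ parks at the first empty spot $\ge\pi(i)$, all cars park. Its bird's eye permutation $\omega_\pi:[n]\to[m]$ sends each occupied spot to the car parked there. Its priority forest is the priority forest whose shifted parent map is $\pi\circ\omega_\pi$. *)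

theory Defs
  imports Main
begin

text \<open>A forest on the vertex set [n]_0 = {0..n} is encoded by its edge set E,
  each edge written as a pair (parent, child).\<close>

definition conn :: "(nat \<times> nat) set \<Rightarrow> (nat \<times> nat) set" where
  "conn E = (E \<union> E\<inverse>)\<^sup>*"

definition priority_forest :: "nat \<Rightarrow> (nat \<times> nat) set \<Rightarrow> bool" where
  "priority_forest n E \<longleftrightarrow>
     E \<subseteq> {0..n} \<times> {0..n}
   \<and> (\<forall>p c. (p, c) \<in> E \<longrightarrow> p < c)
   \<and> (\<forall>p p' c. (p, c) \<in> E \<longrightarrow> (p', c) \<in> E \<longrightarrow> p = p')
   \<and> (\<forall>x\<in>{0..n}. \<forall>y\<in>{0..n}. (x, y) \<notin> conn E \<longrightarrow>
        (\<forall>a b. (x, a) \<in> conn E \<longrightarrow> (y, b) \<in> conn E \<longrightarrow> a < b)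
      \<or> (\<forall>a b. (x, a) \<in> conn E \<longrightarrow> (y, b) \<in> conn E \<longrightarrow> b < a))"

definition shifted_parent :: "nat \<Rightarrow> (nat \<times> nat) set \<Rightarrow> nat \<Rightarrow> nat option" where
  "shifted_parent n E i =
     (if i \<in> {1..n} \<and> (\<exists>p. (p, i) \<in> E) then Some ((THE p. (p, i) \<in> E) + 1) else None)"

definition pf_cover :: "nat \<Rightarrow> (nat \<times> nat) set \<Rightarrow> (nat \<times> nat) set \<Rightarrow> bool" where
  "pf_cover n Q Q' \<longleftrightarrow> priority_forest n Q \<and> priority_forest n Q' \<and> Q \<subset> Q'
     \<and> \<not> (\<exists>R. priority_forest n R \<and> Q \<subset> R \<and> R \<subset> Q')"

definition maximal_chain :: "nat \<Rightarrow> (nat \<times> nat) set \<Rightarrow> (nat \<times> nat) set list \<Rightarrow> bool" where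
  "maximal_chain n P Cs \<longleftrightarrow> Cs \<noteq> [] \<and> hd Cs = {} \<and> last Cs = P
     \<and> (\<forall>i. Suc i < length Cs \<longrightarrow> pf_cover n (Cs ! i) (Cs ! Suc i))"

text \<open>lambda(Q,Q'): the larger endpoint (= child) of the added edge.\<close>
definition jh_label :: "(nat \<times> nat) set \<Rightarrow> (nat \<times> nat) set \<Rightarrow> nat" where
  "jh_label Q Q' = (THE c. \<exists>p. (p, c) \<in> Q' - Q)"

definition jh_perm :: "(nat \<times> nat) set list \<Rightarrow> nat \<Rightarrow> nat" where
  "jh_perm Cs i = jh_label (Cs ! (i - 1)) (Cs ! i)"

definition partial_inv :: "nat \<Rightarrow> (nat \<Rightarrow> nat) \<Rightarrow> nat \<Rightarrow> nat option" where
  "partial_inv m f s = (if \<exists>i\<in>{1..m}. f i = s then Some (THE i. i \<in> {1..m} \<and> f i = s) else None)"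

text \<open>Parking process: after cars 1..k arrived, the map spot \<mapsto> car.\<close>
primrec park_map :: "(nat \<Rightarrow> nat) \<Rightarrow> nat \<Rightarrow> nat \<Rightarrow> nat \<Rightarrow> nat option" where
  "park_map \<pi> n 0 = Map.empty"
| "park_map \<pi> n (Suc k) =
     (let M = park_map \<pi> n k in
      if \<exists>s. \<pi> (Suc k) \<le> s \<and> s \<le> n \<and> M s = None
      then M((LEAST s. \<pi> (Suc k) \<le> s \<and> s \<le> n \<and> M s = None) \<mapsto> Suc k)
      else M)"

definition parking_function :: "nat \<Rightarrow> nat \<Rightarrow> (nat \<Rightarrow> nat) \<Rightarrow> bool" where
  "parking_function m n \<pi> \<longleftrightarrow>
     (\<forall>i\<in>{1..m}. \<pi> i \<in> {1..n})
   \<and> (\<forall>k\<in>{1..m}. \<exists>s. \<pi> k \<le> s \<and> s \<le> n \<and> park_map \<pi> n (k - 1) s = None)"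

definition birds_eye :: "nat \<Rightarrow> nat \<Rightarrow> (nat \<Rightarrow> nat) \<Rightarrow> nat \<Rightarrow> nat option" where
  "birds_eye m n \<pi> s = (if s \<in> {1..n} then park_map \<pi> n m s else None)"

definition pf_of_parking :: "nat \<Rightarrow> nat \<Rightarrow> (nat \<Rightarrow> nat) \<Rightarrow> (nat \<times> nat) set" where
  "pf_of_parking m n \<pi> = (THE E. priority_forest n E \<and>
      (\<forall>i. shifted_parent n E i = map_option \<pi> (birds_eye m n \<pi> i)))"

end

theory Submission
  imports Defs
begin

definition basic :: "nat \<Rightarrow> (nat \<times> nat) set \<Rightarrow> bool" where
  "basic n E \<longleftrightarrow> E \<subseteq> {0..n} \<times> {0..n} \<and> (\<forall>p c. (p, c) \<in> E \<longrightarrow> p < c)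
     \<and> (\<forall>p p' c. (p, c) \<in> E \<longrightarrow> (p', c) \<in> E \<longrightarrow> p = p')"

definition gapfree :: "(nat \<times> nat) set \<Rightarrow> bool" where
  "gapfree E \<longleftrightarrow> (\<forall>p c v. (p, c) \<in> E \<longrightarrow> p < v \<longrightarrow> v < c \<longrightarrow> (\<exists>q. (q, v) \<in> E))"

lemma conn_sym: "(x, y) \<in> conn E \<Longrightarrow> (y, x) \<in> conn E"
  unfolding conn_def
  by (metis converse_Un converse_converse rtrancl_converseI sup_commute)

lemma conn_trans: "(x, y) \<in> conn E \<Longrightarrow> (y, z) \<in> conn E \<Longrightarrow> (x, z) \<in> conn E"
  unfolding conn_def by (rule rtrancl_trans)

lemma conn_edge: "(x, y) \<in> E \<Longrightarrow> (x, y) \<in> conn E"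
  unfolding conn_def by auto

lemma conn_refl: "(x, x) \<in> conn E"
  unfolding conn_def by auto

lemma root_min:
  assumes inc: "\<forall>p c. (p, c) \<in> E \<longrightarrow> p < c"
    and un: "\<forall>p p' c. (p, c) \<in> E \<longrightarrow> (p', c) \<in> E \<longrightarrow> p = p'"
    and np: "\<not> (\<exists>q. (q, v) \<in> E)" and vu: "(v, u) \<in> conn E"
  shows "v \<le> u"
proof -
  have "(v, u) \<in> E\<^sup>*"
    using vu unfolding conn_def
  proof (induction rule: rtrancl_induct)
    case base show ?case by simp
  next
    case (step y z)
    from step.hyps(2) show ?case
    proof
      assume "(y, z) \<in> E" thus ?thesis using step.IH by (rule rtrancl_into_rtrancl[rotated])
    next
      assume "(y, z) \<in> E\<inverse>"
      hence zy: "(z, y) \<in> E" by simp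
      have "y \<noteq> v" using np zy by blast
      with step.IH obtain y' where "(v, y') \<in> E\<^sup>*" "(y', y) \<in> E"
        by (metis rtranclE)
      with zy un show ?thesis by metis
    qed
  qed
  thus ?thesis
  proof (induction rule: rtrancl_induct)
    case base show ?case by simp
  next
    case (step y z) with inc show ?case by (metis less_imp_le order_trans)
  qed
qed

lemma pf_basic: "priority_forest n E \<Longrightarrow> basic n E"
  by (simp add: priority_forest_def basic_def)

lemma pf_gapfree:
  assumes pf: "priority_forest n E"
  shows "gapfree E"
  unfolding gapfree_def
proof (intro allI impI)
  fix p c v assume pc: "(p, c) \<in> E" "p < v" "v < c"
  show "\<exists>q. (q, v) \<in> E"
  proof (rule ccontr)
    assume np: "\<not> (\<exists>q. (q, v) \<in> E)"
    have box: "c \<le> n" "p \<le> n" using pf pc unfolding priority_forest_def by auto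
    have "(p, v) \<in> conn E"
    proof (rule ccontr)
      assume nc: "(p, v) \<notin> conn E"
      have "p \<in> {0..n}" "v \<in> {0..n}" using box pc by auto
      with pf nc have ord: "(\<forall>a b. (p, a) \<in> conn E \<longrightarrow> (v, b) \<in> conn E \<longrightarrow> a < b)
          \<or> (\<forall>a b. (p, a) \<in> conn E \<longrightarrow> (v, b) \<in> conn E \<longrightarrow> b < a)"
        unfolding priority_forest_def by blast
      have "(p, c) \<in> conn E" "(p, p) \<in> conn E" "(v, v) \<in> conn E"
        using pc conn_edge conn_refl by auto
      with ord pc show False by force
    qed
    hence "(v, p) \<in> conn E" by (rule conn_sym)
    hence "v \<le> p" using root_min pf np unfolding priority_forest_def by blast
    with pc show False by simp
  qed
qed

lemma span_parent:
  assumes b: "basic n E" and g: "gapfree E" and xy: "(x, y) \<in> conn E"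
  shows "\<forall>w. min x y < w \<and> w \<le> max x y \<longrightarrow> (\<exists>q. (q, w) \<in> E)"
  using xy unfolding conn_def
proof (induction rule: rtrancl_induct)
  case base show ?case by auto
next
  case (step y z)
  have edge: "\<forall>w. min y z < w \<and> w \<le> max y z \<longrightarrow> (\<exists>q. (q, w) \<in> E)"
  proof -
    obtain a b' where ab: "(a, b') \<in> E" "(a = y \<and> b' = z) \<or> (a = z \<and> b' = y)"
      using step.hyps(2) by auto
    have "a < b'" using ab b unfolding basic_def by auto
    then have mm: "min y z = a" "max y z = b'" using ab(2) by auto
    show ?thesis unfolding mm
    proof (intro allI impI)
      fix w assume "a < w \<and> w \<le> b'"
      then show "\<exists>q. (q, w) \<in> E" using g ab(1) unfolding gapfree_def
        by (cases "w = b'") auto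
    qed
  qed
  show ?case
  proof (intro allI impI)
    fix w assume w: "min x z < w \<and> w \<le> max x z"
    hence "(min x y < w \<and> w \<le> max x y) \<or> (min y z < w \<and> w \<le> max y z)"
      unfolding min_def max_def by (auto split: if_splits)
    then show "\<exists>q. (q, w) \<in> E" using step.IH edge by blast
  qed
qed

lemma chain_conn:
  "(\<forall>w. a < w \<and> w \<le> b \<longrightarrow> (w - 1, w) \<in> conn E) \<Longrightarrow> a \<le> b \<Longrightarrow> (a, b) \<in> conn E"
proof (induction b)
  case 0 thus ?case by (simp add: conn_refl)
next
  case (Suc b)
  show ?case
  proof (cases "a = Suc b")
    case True thus ?thesis by (simp add: conn_refl)
  next
    case False
    hence ab: "a \<le> b" using Suc.prems by simp
    hence "(a, b) \<in> conn E" using Suc by simp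
    moreover have "(b, Suc b) \<in> conn E" using Suc.prems(1) ab
      by (metis diff_Suc_1 le_imp_less_Suc order_refl)
    ultimately show ?thesis by (rule conn_trans)
  qed
qed

lemma parent_conn:
  assumes b: "basic n E" and g: "gapfree E"
  shows "(\<exists>q. (q, z) \<in> E) \<Longrightarrow> (z - 1, z) \<in> conn E"
proof (induction z rule: less_induct)
  case (less z)
  then obtain q where qz: "(q, z) \<in> E" by blast
  have qlt: "q < z" using qz b unfolding basic_def by auto
  have "\<forall>w. q < w \<and> w \<le> z - 1 \<longrightarrow> (w - 1, w) \<in> conn E"
  proof (intro allI impI)
    fix w assume w: "q < w \<and> w \<le> z - 1"
    hence wz: "w < z" using qlt by linarith
    hence "\<exists>q'. (q', w) \<in> E" using g qz w unfolding gapfree_def by blast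
    thus "(w - 1, w) \<in> conn E" using less.IH wz by blast
  qed
  hence "(q, z - 1) \<in> conn E" using chain_conn qlt by auto
  moreover have "(q, z) \<in> conn E" using qz conn_edge by auto
  ultimately show ?case by (meson conn_sym conn_trans)
qed

lemma convex:
  assumes b: "basic n E" and g: "gapfree E" and xy: "(x, y) \<in> conn E"
    and "x \<le> z" "z \<le> y"
  shows "(x, z) \<in> conn E"
proof -
  have "\<forall>w. x < w \<and> w \<le> z \<longrightarrow> (\<exists>q. (q, w) \<in> E)"
    using span_parent[OF b g xy] assms(4,5) by auto
  hence "\<forall>w. x < w \<and> w \<le> z \<longrightarrow> (w - 1, w) \<in> conn E"
    using parent_conn[OF b g] by blast
  thus ?thesis using chain_conn assms(4) by blast
qed

lemma gapfree_pf:
  assumes b: "basic n E" and g: "gapfree E"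
  shows "priority_forest n E"
  unfolding priority_forest_def
proof (intro conjI ballI impI)
  show "E \<subseteq> {0..n} \<times> {0..n}" "\<forall>p c. (p, c) \<in> E \<longrightarrow> p < c"
    "\<forall>p p' c. (p, c) \<in> E \<longrightarrow> (p', c) \<in> E \<longrightarrow> p = p'"
    using b unfolding basic_def by auto
next
  fix x y assume nc: "(x, y) \<notin> conn E"
  have key: "\<And>a b. (x, a) \<in> conn E \<Longrightarrow> (y, b) \<in> conn E \<Longrightarrow> a \<noteq> b"
    using nc by (meson conn_sym conn_trans)
  show "(\<forall>a b. (x, a) \<in> conn E \<longrightarrow> (y, b) \<in> conn E \<longrightarrow> a < b) \<or>
        (\<forall>a b. (x, a) \<in> conn E \<longrightarrow> (y, b) \<in> conn E \<longrightarrow> b < a)"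
  proof (rule ccontr)
    assume "\<not> ?thesis"
    then obtain a1 b1 a2 b2 where h: "(x, a1) \<in> conn E" "(y, b1) \<in> conn E" "\<not> a1 < b1"
      "(x, a2) \<in> conn E" "(y, b2) \<in> conn E" "\<not> b2 < a2" by blast
    have lt: "b1 < a1" "a2 < b2" using h key by (metis linorder_neqE_nat)+
    show False
    proof (cases "a1 < b2")
      case True
      have "(b1, b2) \<in> conn E" using h by (meson conn_sym conn_trans)
      hence "(b1, a1) \<in> conn E" using convex[OF b g] lt True by simp
      hence "(y, a1) \<in> conn E" using h conn_trans by blast
      thus False using key h by blast
    next
      case False
      hence lt2: "b2 < a1" using key h by (metis linorder_neqE_nat)
      have "(a2, a1) \<in> conn E" using h by (meson conn_sym conn_trans)
      hence "(a2, b2) \<in> conn E" using convex[OF b g] lt lt2 by simp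
      hence "(x, b2) \<in> conn E" using h conn_trans by blast
      thus False using key h by blast
    qed
  qed
qed

lemma basic_mono: "basic n Q' \<Longrightarrow> R \<subseteq> Q' \<Longrightarrow> basic n R"
  unfolding basic_def by blast

lemma cover_one:
  assumes cov: "pf_cover n Q Q'"
  shows "\<exists>p c. (p, c) \<notin> Q \<and> Q' = insert (p, c) Q"
proof -
  have pfQ: "priority_forest n Q" and pfQ': "priority_forest n Q'" and sub: "Q \<subset> Q'"
    and nomid: "\<not> (\<exists>R. priority_forest n R \<and> Q \<subset> R \<and> R \<subset> Q')"
    using cov unfolding pf_cover_def by auto
  have "Q' \<subseteq> {0..n} \<times> {0..n}" using pfQ' unfolding priority_forest_def by auto
  hence fin: "finite Q'" by (rule finite_subset) simp
  define S where "S = snd ` (Q' - Q)"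
  have Sne: "S \<noteq> {}" using sub S_def by auto
  have Sfin: "finite S" using fin S_def by auto
  define c where "c = Min S"
  have "c \<in> S" using Sne Sfin c_def by simp
  then obtain p where pc: "(p, c) \<in> Q' - Q" using S_def by auto
  have minc: "\<And>a b. (a, b) \<in> Q' - Q \<Longrightarrow> c \<le> b"
    using Sfin c_def S_def by (metis Min_le image_eqI snd_conv)
  define R where "R = insert (p, c) Q"
  have RQ': "R \<subseteq> Q'" using pc sub R_def by auto
  have bR: "basic n R" using basic_mono[OF pf_basic[OF pfQ'] RQ'] .
  have gQ: "gapfree Q" using pf_gapfree[OF pfQ] .
  have gQ': "gapfree Q'" using pf_gapfree[OF pfQ'] .
  have gR: "gapfree R"
    unfolding gapfree_def
  proof (intro allI impI)
    fix a b v assume ab: "(a, b) \<in> R" "a < v" "v < b"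
    show "\<exists>q. (q, v) \<in> R"
    proof (cases "(a, b) \<in> Q")
      case True
      then show ?thesis using gQ ab R_def unfolding gapfree_def by blast
    next
      case False
      hence abpc: "a = p" "b = c" using ab R_def by auto
      obtain q where qv: "(q, v) \<in> Q'" using gQ' pc ab abpc unfolding gapfree_def by blast
      have "(q, v) \<in> Q"
      proof (rule ccontr)
        assume "(q, v) \<notin> Q"
        hence "c \<le> v" using minc qv by blast
        thus False using ab abpc by simp
      qed
      thus ?thesis using R_def by blast
    qed
  qed
  have pfR: "priority_forest n R" using gapfree_pf[OF bR gR] .
  have "Q \<subset> R" using pc R_def by auto
  hence "R = Q'" using nomid pfR RQ' by blast
  thus ?thesis using pc R_def by blast
qed

lemma sp_lem:
  assumes pf: "priority_forest n E"
  shows "shifted_parent n E b = Some (Suc a) \<longleftrightarrow> (a, b) \<in> E"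
proof
  assume h: "shifted_parent n E b = Some (Suc a)"
  hence ex: "\<exists>p. (p, b) \<in> E" and th: "(THE p. (p, b) \<in> E) = a"
    unfolding shifted_parent_def by (auto split: if_splits)
  from ex obtain p where pb: "(p, b) \<in> E" by blast
  have "(THE p. (p, b) \<in> E) = p" using pb pf unfolding priority_forest_def
    by (blast intro: the_equality)
  then show "(a, b) \<in> E" using th pb by simp
next
  assume ab: "(a, b) \<in> E"
  have lt: "a < b" "b \<le> n" using ab pf unfolding priority_forest_def by auto
  have "(THE p. (p, b) \<in> E) = a" using ab pf unfolding priority_forest_def
    by (blast intro: the_equality)
  thus "shifted_parent n E b = Some (Suc a)" unfolding shifted_parent_def using ab lt by auto
qed

lemma sp_some: "shifted_parent n E b = Some x \<Longrightarrow> \<exists>a. x = Suc a"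
  by (auto simp: shifted_parent_def split: if_splits)

lemma sp_unique:
  assumes "priority_forest n E" "priority_forest n F" "\<And>i. shifted_parent n E i = shifted_parent n F i"
  shows "E = F"
proof -
  have "\<And>a b. (a, b) \<in> E \<longleftrightarrow> (a, b) \<in> F"
    using sp_lem[OF assms(1)] sp_lem[OF assms(2)] assms(3) by metis
  thus ?thesis by (meson subrelI subset_antisym)
qed

theorem lemma4p2:
  fixes n m :: nat and P :: "(nat \<times> nat) set" and Cs :: "(nat \<times> nat) set list"
  assumes "priority_forest n P"
    and "card P = m"
    and "maximal_chain n P Cs"
  shows "(\<forall>i\<in>{1..m}. shifted_parent n P (jh_perm Cs i) \<noteq> None)
       \<and> parking_function m n (\<lambda>i. the (shifted_parent n P (jh_perm Cs i)))
       \<and> pf_of_parking m n (\<lambda>i. the (shifted_parent n P (jh_perm Cs i))) = P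
       \<and> birds_eye m n (\<lambda>i. the (shifted_parent n P (jh_perm Cs i))) = partial_inv m (jh_perm Cs)"
proof -
  note pfP = assms(1)
  from assms(3) have ne: "Cs \<noteq> []" and hd: "Cs ! 0 = {}" and lst: "Cs ! (length Cs - 1) = P"
    and cov: "\<forall>i. Suc i < length Cs \<longrightarrow> pf_cover n (Cs ! i) (Cs ! Suc i)"
    unfolding maximal_chain_def by (auto simp: hd_conv_nth last_conv_nth)
  define k where "k = length Cs - 1"
  have "\<forall>i. \<exists>e. i < k \<longrightarrow> e \<notin> Cs ! i \<and> Cs ! (Suc i) = insert e (Cs ! i)"
  proof (intro allI)
    fix i
    show "\<exists>e. i < k \<longrightarrow> e \<notin> Cs ! i \<and> Cs ! (Suc i) = insert e (Cs ! i)"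
    proof (cases "i < k")
      case True
      then have "Suc i < length Cs" using k_def ne by simp
      then obtain p c where "(p, c) \<notin> Cs ! i \<and> Cs ! (Suc i) = insert (p, c) (Cs ! i)"
        using cover_one cov by blast
      then show ?thesis by blast
    next
      case False thus ?thesis by blast
    qed
  qed
  then have "\<exists>f. \<forall>i. i < k \<longrightarrow> f i \<notin> Cs ! i \<and> Cs ! (Suc i) = insert (f i) (Cs ! i)"
    by (rule choice)
  then obtain f where f0: "\<forall>i. i < k \<longrightarrow> f i \<notin> Cs ! i \<and> Cs ! (Suc i) = insert (f i) (Cs ! i)"
    by blast
  have f: "\<And>i. i < k \<Longrightarrow> f i \<notin> Cs ! i \<and> Cs ! (Suc i) = insert (f i) (Cs ! i)"
    using f0 by blast
  define pp where "pp i = fst (f (i - 1))" for i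
  define cc where "cc i = snd (f (i - 1))" for i
  have step: "\<And>i. i \<in> {1..k} \<Longrightarrow> (pp i, cc i) \<notin> Cs ! (i - 1) \<and> Cs ! i = insert (pp i, cc i) (Cs ! (i - 1))"
  proof -
    fix i assume "i \<in> {1..k}"
    then have "i - 1 < k" "Suc (i - 1) = i" by auto
    then show "(pp i, cc i) \<notin> Cs ! (i - 1) \<and> Cs ! i = insert (pp i, cc i) (Cs ! (i - 1))"
      using f[of "i - 1"] by (simp add: pp_def cc_def)
  qed
  have img: "\<And>j. j \<le> k \<Longrightarrow> Cs ! j = (\<lambda>i. (pp i, cc i)) ` {1..j}"
  proof -
    fix j show "j \<le> k \<Longrightarrow> Cs ! j = (\<lambda>i. (pp i, cc i)) ` {1..j}"
    proof (induction j)
      case 0 show ?case using hd by simp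
    next
      case (Suc j)
      then have "Cs ! (Suc j) = insert (pp (Suc j), cc (Suc j)) (Cs ! j)" using step[of "Suc j"] by simp
      moreover have "{1..Suc j} = insert (Suc j) {1..j}" by auto
      ultimately show ?case using Suc by simp
    qed
  qed
  have PK: "P = Cs ! k" using lst k_def by simp
  have pf_i: "\<And>i. i \<in> {1..k} \<Longrightarrow> priority_forest n (Cs ! i)"
  proof -
    fix i assume i: "i \<in> {1..k}"
    then have "Suc (i - 1) < length Cs" "Suc (i - 1) = i" using k_def ne by auto
    then have "pf_cover n (Cs ! (i - 1)) (Cs ! Suc (i - 1))" using cov by blast
    then have "pf_cover n (Cs ! (i - 1)) (Cs ! i)" using \<open>Suc (i - 1) = i\<close> by simp
    then show "priority_forest n (Cs ! i)" unfolding pf_cover_def by blast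
  qed
  have Pbas: "basic n P" using pf_basic[OF pfP] .
  have inP: "\<And>i. i \<in> {1..k} \<Longrightarrow> (pp i, cc i) \<in> P" using img PK by auto
  have ppcc: "\<And>i. i \<in> {1..k} \<Longrightarrow> pp i < cc i \<and> cc i \<le> n"
  proof -
    fix i assume i: "i \<in> {1..k}"
    have "(pp i, cc i) \<in> {0..n} \<times> {0..n}" "pp i < cc i" using inP[OF i] Pbas unfolding basic_def by blast+
    then show "pp i < cc i \<and> cc i \<le> n" by simp
  qed
  have neq: "\<And>i j. i \<in> {1..k} \<Longrightarrow> j \<in> {1..k} \<Longrightarrow> i < j \<Longrightarrow> cc i \<noteq> cc j"
  proof
    fix i j assume i: "i \<in> {1..k}" and j: "j \<in> {1..k}" and ij: "i < j" and eq: "cc i = cc j"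
    have nj: "(pp j, cc j) \<notin> Cs ! (j - 1)" using step[OF j] by simp
    have ii: "(pp i, cc i) \<in> Cs ! (j - 1)" using img[of "j - 1"] i j ij by auto
    have "(pp i, cc j) \<in> P" using inP[OF i] eq by simp
    then have "pp i = pp j" using inP[OF j] Pbas unfolding basic_def by blast
    thus False using nj ii eq by simp
  qed
  have inj: "inj_on cc {1..k}"
  proof (rule inj_onI)
    fix i j assume i: "i \<in> {1..k}" and j: "j \<in> {1..k}" and e: "cc i = cc j"
    show "i = j"
    proof (rule ccontr)
      assume "i \<noteq> j"
      then have "i < j \<or> j < i" by arith
      then show False using neq[OF i j] neq[OF j i] e by auto
    qed
  qed
  have mk: "m = k"
  proof -
    have "inj_on (\<lambda>i. (pp i, cc i)) {1..k}" using inj unfolding inj_on_def by blast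
    hence "card ((\<lambda>i. (pp i, cc i)) ` {1..k}) = card {1..k}" by (rule card_image)
    moreover have "P = (\<lambda>i. (pp i, cc i)) ` {1..k}" using img[of k] PK by simp
    ultimately show ?thesis using assms(2) by simp
  qed
  define \<pi> where "\<pi> = (\<lambda>i. the (shifted_parent n P (jh_perm Cs i)))"
  have jh: "\<And>i. i \<in> {1..k} \<Longrightarrow> jh_perm Cs i = cc i"
  proof -
    fix i assume i: "i \<in> {1..k}"
    have "Cs ! i - Cs ! (i - 1) = {(pp i, cc i)}" using step[OF i] by auto
    thus "jh_perm Cs i = cc i" unfolding jh_perm_def jh_label_def
      by (auto intro!: the_equality)
  qed
  have spP: "\<And>i. i \<in> {1..k} \<Longrightarrow> shifted_parent n P (cc i) = Some (Suc (pp i))"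
    using sp_lem[OF pfP] inP by blast
  have \<pi>i: "\<And>i. i \<in> {1..k} \<Longrightarrow> \<pi> i = Suc (pp i)" using jh spP \<pi>_def by simp
  have park: "\<And>j. j \<le> k \<Longrightarrow> (\<forall>s i. park_map \<pi> n j s = Some i \<longleftrightarrow> (i \<in> {1..j} \<and> cc i = s))"
  proof -
    fix j show "j \<le> k \<Longrightarrow> (\<forall>s i. park_map \<pi> n j s = Some i \<longleftrightarrow> (i \<in> {1..j} \<and> cc i = s))"
    proof (induction j)
      case 0 show ?case by simp
    next
      case (Suc j)
      hence jk: "j \<le> k" and IH: "\<forall>s i. park_map \<pi> n j s = Some i \<longleftrightarrow> (i \<in> {1..j} \<and> cc i = s)" by auto
      define M where "M = park_map \<pi> n j"
      define c where "c = cc (Suc j)"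
      define p where "p = pp (Suc j)"
      have sj: "Suc j \<in> {1..k}" using Suc.prems by simp
      have pc: "p < c" "c \<le> n" using ppcc[OF sj] p_def c_def by auto
      have \<pi>s: "\<pi> (Suc j) = Suc p" using \<pi>i[OF sj] p_def by simp
      have Mc: "M c = None"
      proof (rule ccontr)
        assume "M c \<noteq> None"
        then obtain i where "M c = Some i" by auto
        with IH M_def have i: "i \<in> {1..j}" "cc i = c" by auto
        then have "i \<in> {1..k}" using jk by auto
        then have "i = Suc j" using inj_onD[OF inj, of i "Suc j"] sj c_def i by simp
        then show False using i by simp
      qed
      have ex: "\<exists>s. \<pi> (Suc j) \<le> s \<and> s \<le> n \<and> M s = None" using \<pi>s pc Mc by (intro exI[of _ c]) auto
      have least: "(LEAST s. \<pi> (Suc j) \<le> s \<and> s \<le> n \<and> M s = None) = c"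
      proof (rule Least_equality)
        show "\<pi> (Suc j) \<le> c \<and> c \<le> n \<and> M c = None" using \<pi>s pc Mc by auto
      next
        fix s assume s: "\<pi> (Suc j) \<le> s \<and> s \<le> n \<and> M s = None"
        show "c \<le> s"
        proof (rule ccontr)
          assume "\<not> c \<le> s" hence sc: "s < c" by simp
          have ps: "p < s" using s \<pi>s by simp
          have "gapfree (Cs ! (Suc j))" using pf_i[OF sj] pf_gapfree by blast
          moreover have "(p, c) \<in> Cs ! (Suc j)" using step[OF sj] p_def c_def by simp
          ultimately obtain q where "(q, s) \<in> Cs ! (Suc j)" using ps sc unfolding gapfree_def by blast
          hence "(q, s) \<in> Cs ! j" using step[OF sj] sc p_def c_def by auto
          hence "\<exists>i\<in>{1..j}. cc i = s" using img[OF jk] by auto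
          then obtain i where "i \<in> {1..j}" "cc i = s" by blast
          hence "M s = Some i" using IH M_def by simp
          with s show False by simp
        qed
      qed
      have pm: "park_map \<pi> n (Suc j) = M(c \<mapsto> Suc j)" using ex least by (simp add: M_def Let_def)
      show ?case
      proof (intro allI)
        fix s i
        show "park_map \<pi> n (Suc j) s = Some i \<longleftrightarrow> (i \<in> {1..Suc j} \<and> cc i = s)"
        proof (cases "s = c")
          case True
          have "i \<in> {1..Suc j} \<and> cc i = s \<longleftrightarrow> i = Suc j"
          proof
            assume h: "i \<in> {1..Suc j} \<and> cc i = s"
            then have "i \<in> {1..k}" using sj by auto
            then show "i = Suc j" using inj_onD[OF inj, of i "Suc j"] sj h True c_def by simp
          next
            assume "i = Suc j" then show "i \<in> {1..Suc j} \<and> cc i = s" using True c_def by simp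
          qed
          then show ?thesis using pm True by auto
        next
          case False
          then show ?thesis using pm IH M_def c_def by (auto simp: le_Suc_eq)
        qed
      qed
    qed
  qed
  have parkm: "\<forall>s i. park_map \<pi> n k s = Some i \<longleftrightarrow> (i \<in> {1..k} \<and> cc i = s)" using park by simp
  have theq: "\<And>i. i \<in> {1..k} \<Longrightarrow> (THE i'. i' \<in> {1..k} \<and> cc i' = cc i) = i"
  proof -
    fix i assume i: "i \<in> {1..k}"
    show "(THE i'. i' \<in> {1..k} \<and> cc i' = cc i) = i"
    proof (rule the_equality)
      show "i \<in> {1..k} \<and> cc i = cc i" using i by simp
    next
      fix i' assume "i' \<in> {1..k} \<and> cc i' = cc i"
      then show "i' = i" using inj_onD[OF inj, of i' i] i by blast
    qed
  qed
  have be: "birds_eye k n \<pi> = partial_inv k cc"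
  proof (rule ext)
    fix s
    show "birds_eye k n \<pi> s = partial_inv k cc s"
    proof (cases "\<exists>i\<in>{1..k}. cc i = s")
      case True
      then obtain i where i: "i \<in> {1..k}" "cc i = s" by blast
      have s1n: "s \<in> {1..n}" using ppcc[OF i(1)] i(2) by auto
      show ?thesis using True i s1n parkm theq[OF i(1)] unfolding birds_eye_def partial_inv_def by auto
    next
      case False
      then have "park_map \<pi> n k s = None" using parkm by (metis not_None_eq)
      then show ?thesis using False unfolding birds_eye_def partial_inv_def by auto
    qed
  qed
  have pinv: "partial_inv k (jh_perm Cs) = partial_inv k cc"
  proof -
    have a: "\<And>s. (\<exists>i\<in>{1..k}. jh_perm Cs i = s) = (\<exists>i\<in>{1..k}. cc i = s)" using jh by auto
    have b: "\<And>s. (THE i. i \<in> {1..k} \<and> jh_perm Cs i = s) = (THE i. i \<in> {1..k} \<and> cc i = s)"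
      by (rule arg_cong[where f=The], rule ext) (use jh in auto)
    show ?thesis unfolding partial_inv_def a b by simp
  qed
  have c1: "\<forall>i\<in>{1..m}. shifted_parent n P (jh_perm Cs i) \<noteq> None"
    using mk jh spP by simp
  have c2: "parking_function m n \<pi>"
    unfolding parking_function_def
  proof (intro conjI ballI)
    fix i assume "i \<in> {1..m}"
    then have i: "i \<in> {1..k}" using mk by simp
    show "\<pi> i \<in> {1..n}" using \<pi>i[OF i] ppcc[OF i] by auto
  next
    fix j assume "j \<in> {1..m}"
    then have j: "j \<in> {1..k}" using mk by simp
    have "park_map \<pi> n (j - 1) (cc j) = None"
    proof (rule ccontr)
      assume "park_map \<pi> n (j - 1) (cc j) \<noteq> None"
      then obtain i where "park_map \<pi> n (j - 1) (cc j) = Some i" by auto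
      then have "i \<in> {1..j - 1}" "cc i = cc j" using park[of "j - 1"] j by auto
      then have "i \<in> {1..k}" "i < j" using j by auto
      then show False using neq[of i j] j \<open>cc i = cc j\<close> by blast
    qed
    then show "\<exists>s. \<pi> j \<le> s \<and> s \<le> n \<and> park_map \<pi> n (j - 1) s = None"
      using \<pi>i[OF j] ppcc[OF j] by (intro exI[of _ "cc j"]) auto
  qed
  have be2: "birds_eye m n \<pi> = partial_inv m (jh_perm Cs)" using be pinv mk by simp
  have sat: "\<forall>i. shifted_parent n P i = map_option \<pi> (birds_eye m n \<pi> i)"
  proof
    fix s
    show "shifted_parent n P s = map_option \<pi> (birds_eye m n \<pi> s)"
    proof (cases "\<exists>i\<in>{1..k}. cc i = s")
      case True
      then obtain i where i: "i \<in> {1..k}" "cc i = s" by blast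
      have "birds_eye m n \<pi> s = Some i"
        using be mk i theq[OF i(1)] unfolding partial_inv_def by auto
      then show ?thesis using spP[OF i(1)] \<pi>i[OF i(1)] i by simp
    next
      case False
      have "birds_eye m n \<pi> s = None" using be mk False unfolding partial_inv_def by auto
      moreover have "shifted_parent n P s = None"
      proof (rule ccontr)
        assume "shifted_parent n P s \<noteq> None"
        then obtain x where x: "shifted_parent n P s = Some x" by auto
        then obtain a where "x = Suc a" using sp_some by blast
        then have "(a, s) \<in> P" using x sp_lem[OF pfP] by simp
        then show False using False img[of k] PK by auto
      qed
      ultimately show ?thesis by simp
    qed
  qed
  have c3: "pf_of_parking m n \<pi> = P"
    unfolding pf_of_parking_def
  proof (rule the_equality)
    show "priority_forest n P \<and> (\<forall>i. shifted_parent n P i = map_option \<pi> (birds_eye m n \<pi> i))"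
      using pfP sat by simp
  next
    fix E assume E: "priority_forest n E \<and> (\<forall>i. shifted_parent n E i = map_option \<pi> (birds_eye m n \<pi> i))"
    show "E = P" using sp_unique[of n E P] E pfP sat by simp
  qed
  show ?thesis using c1 c2 c3 be2 unfolding \<pi>_def by simp
qed

end
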